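(* Let $H\in(\tfrac12,1)$, $\sigma>0$, $N>1$. (1) For all $1\le i<n\le N$, $J_n^{(N,H)}(i)=N^{-H}j_n^H(i)$. (2) For all $1\le n\le N$, $g_n^{(N,H)}=N^{-H}g_n^H$. In particular, for all $1\le n\le N$, $N^H X_n^{(N,H)}=n^H X_n^{(n,H)}$.
   Context: $c_H=\sqrt{\frac{2H\,\Gamma(\frac32-H)}{\Gamma(H+\frac12)\Gamma(2-2H)}}$, $C_H=c_H(H-\frac12)$, $k_H(t,s)=C_H s^{\frac12-H}\int_s^t u^{H-\frac12}(u-s)^{H-\frac32}du$. For $1\le i<n\le N$: $J_n^{(N,H)}(i)=\sigma\sqrt N\int_{(i-1)/N}^{i/N}(k_H(\frac nN,u)-k_H(\frac{n-1}N,u))du$; for $1\le n\le N$: $g_n^{(N,H)}=\sigma\sqrt N\int_{(n-1)/N}^{n/N}k_H(\frac nN,u)du$. Further $j_n^H(i)=\sigma C_H\int_{i-1}^i x^{\frac12-H}\Big(\int_0^1(v+n-1)^{H-\frac12}(v+n-1-x)^{H-\frac32}dv\Big)dx$ and $g_n^H=\sigma C_H\int_{n-1}^n x^{\frac12-H}(n-x)^{H-\frac12}\Big(\int_0^1(y(n-x)+x)^{H-\frac12}y^{H-\frac32}dy\Big)dx$. Let $(\xi_i)_{i\ge1}$ be i.i.d. with $P(\xi_i=\pm1)=\frac12$ and $X_n^{(N,H)}=\sum_{i=1}^{n-1}J_n^{(N,H)}(i)\xi_i+g_n^{(N,H)}\xi_n$ for $1\le n\le N$. *)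

theory Defs
  imports "HOL-Analysis.Analysis"
begin

definition cH :: "real \<Rightarrow> real" where
  "cH H = sqrt ((2 * H * Gamma (3/2 - H)) / (Gamma (H + 1/2) * Gamma (2 - 2*H)))"

definition CH :: "real \<Rightarrow> real" where
  "CH H = cH H * (H - 1/2)"

definition kH :: "real \<Rightarrow> real \<Rightarrow> real \<Rightarrow> real" where
  "kH H t s = CH H * s powr (1/2 - H) *
     integral {s..t} (\<lambda>u. u powr (H - 1/2) * (u - s) powr (H - 3/2))"

definition JN :: "nat \<Rightarrow> real \<Rightarrow> real \<Rightarrow> nat \<Rightarrow> nat \<Rightarrow> real" where
  "JN N H \<sigma> n i = \<sigma> * sqrt (real N) *
     integral {(real i - 1) / real N .. real i / real N}
       (\<lambda>u. kH H (real n / real N) u - kH H ((real n - 1) / real N) u)"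

definition gN :: "nat \<Rightarrow> real \<Rightarrow> real \<Rightarrow> nat \<Rightarrow> real" where
  "gN N H \<sigma> n = \<sigma> * sqrt (real N) *
     integral {(real n - 1) / real N .. real n / real N} (\<lambda>u. kH H (real n / real N) u)"

definition jH :: "real \<Rightarrow> real \<Rightarrow> nat \<Rightarrow> nat \<Rightarrow> real" where
  "jH H \<sigma> n i = \<sigma> * CH H *
     integral {real i - 1 .. real i} (\<lambda>x. x powr (1/2 - H) *
       integral {0..1} (\<lambda>v. (v + real n - 1) powr (H - 1/2) * (v + real n - 1 - x) powr (H - 3/2)))"

definition gH :: "real \<Rightarrow> real \<Rightarrow> nat \<Rightarrow> real" where
  "gH H \<sigma> n = \<sigma> * CH H *
     integral {real n - 1 .. real n} (\<lambda>x. x powr (1/2 - H) * (real n - x) powr (H - 1/2) *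
       integral {0..1} (\<lambda>y. (y * (real n - x) + x) powr (H - 1/2) * y powr (H - 3/2)))"

text \<open>The process value for a given realisation xi of the Rademacher sequence.\<close>
definition XN :: "nat \<Rightarrow> real \<Rightarrow> real \<Rightarrow> (nat \<Rightarrow> real) \<Rightarrow> nat \<Rightarrow> real" where
  "XN N H \<sigma> \<xi> n = (\<Sum>i=1..<n. JN N H \<sigma> n i * \<xi> i) + gN N H \<sigma> n * \<xi> n"

end

theory Submission
  imports Defs
begin

lemma integral_affine_real:
  fixes f :: "real \<Rightarrow> real" assumes c: "c > 0"
  shows "integral {(p - d)/c .. (q - d)/c} (\<lambda>v. f (c * v + d)) = integral {p..q} f / c"
proof (cases "f integrable_on {p..q}")
  case True
  have "(f has_integral integral {p..q} f) (cbox p q)" using integrable_integral[OF True] by (simp add: cbox_interval)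
  from has_integral_affinity'[OF this c, of d] c
  have "((\<lambda>v. f (c * v + d)) has_integral integral {p..q} f / c) {(p - d) / c..(q - d) / c}"
    by (simp add: cbox_interval divide_simps)
  then show ?thesis by (rule integral_unique)
next
  case False
  have "\<not> (\<lambda>v. f (c * v + d)) integrable_on {(p - d)/c .. (q - d)/c}"
  proof
    assume "(\<lambda>v. f (c * v + d)) integrable_on {(p - d)/c .. (q - d)/c}"
    then obtain J where J: "((\<lambda>v. f (c * v + d)) has_integral J) {(p - d)/c .. (q - d)/c}"
      by blast
    have "((\<lambda>v. f (c * v + d)) has_integral ((J * c) /\<^sub>R c ^ DIM(real))) (cbox ((p - d) /\<^sub>R c) ((q - d) /\<^sub>R c))"
      using J c by (simp add: divide_simps)
    then have "(f has_integral (J*c)) (cbox p q)"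
      using has_integral_affinity_iff[OF c, of f d "J*c" p q] by simp
    then show False using False by auto
  qed
  then show ?thesis using False by (simp add: not_integrable_integral)
qed

lemma integrable_sing:
  fixes a b s t :: real
  assumes a: "a > 0" and b: "b > -1" and s: "0 \<le> s" 
  shows "(\<lambda>w. w powr a * (w - s) powr b) integrable_on {s..t}"
proof -
  have "(\<lambda>z. z powr b) integrable_on {s - s..t - s}"
  proof (cases "s \<le> t")
    case True then show ?thesis using integrable_on_powr_from_0[OF b, of "t-s"] by simp
  next
    case False then show ?thesis by (simp add: integrable_on_empty)
  qed
  then have "((\<lambda>z. z powr b) \<circ> (+) (-s)) integrable_on {s..t}"
    using integrable_on_shift_Icc_real[of "\<lambda>z. z powr b" "-s" s t] by simp
  then have g: "(\<lambda>w. (w - s) powr b) integrable_on {s..t}" by (simp add: o_def)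
  have ga: "(\<lambda>w. (w - s) powr b) absolutely_integrable_on {s..t}"
    by (rule nonnegative_absolutely_integrable_1[OF g]) simp
  have cont: "continuous_on {s..t} (\<lambda>w. w powr a)"
    by (rule continuous_on_powr') (use a s in \<open>auto intro: continuous_intros\<close>)
  have "(\<lambda>w. w powr a * (w - s) powr b) absolutely_integrable_on {s..t}"
    by (rule absolutely_integrable_bounded_measurable_product_real[OF
          continuous_imp_measurable_on_sets_lebesgue[OF cont] _ _ ga])
       (auto intro: compact_imp_bounded compact_continuous_image[OF cont])
  then show ?thesis using absolutely_integrable_on_def by blast
qed

lemma powr_fact1:
  fixes N H :: real assumes "N > 0"
  shows "sqrt N * N powr (1/2-H) / N = N powr (-H)"
proof -
  have "sqrt N = N powr (1/2)" using assms by (simp add: powr_half_sqrt)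
  have e0: "N powr (1/2) * N powr (1/2-H) * N powr (-1) = N powr (1/2 + (1/2-H) + (-1))"
    by (simp only: powr_add)
  have e: "N powr (-H) = N powr (1/2) * N powr (1/2-H) * N powr (-1)"
    unfolding e0 by simp
  have "N powr (-1) = 1 / N" using assms by (simp add: powr_minus divide_inverse)
  then show ?thesis using e \<open>sqrt N = _\<close> by simp
qed

lemma J1:
  fixes N H u :: real and n :: nat
  assumes H: "1/2 < H" and N: "N > 0" and u: "0 \<le> u" "u \<le> (real n - 1) / N" and n: "n \<ge> 1"
  shows "kH H (real n / N) u - kH H ((real n - 1) / N) u =
    CH H * u powr (1/2-H) * integral {(real n - 1)/N .. real n / N} (\<lambda>w. w powr (H-1/2) * (w-u) powr (H-3/2))"
proof -
  have le: "(real n - 1) / N \<le> real n / N" using N by (simp add: divide_right_mono)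
  have int: "(\<lambda>w. w powr (H-1/2) * (w-u) powr (H-3/2)) integrable_on {u .. real n / N}"
    by (rule integrable_sing) (use H u in auto)
  have c: "integral {u .. real n / N} (\<lambda>w. w powr (H-1/2) * (w-u) powr (H-3/2)) =
     integral {u .. (real n - 1) / N} (\<lambda>w. w powr (H-1/2) * (w-u) powr (H-3/2)) +
     integral {(real n - 1) / N .. real n / N} (\<lambda>w. w powr (H-1/2) * (w-u) powr (H-3/2))"
    using Henstock_Kurzweil_Integration.integral_combine[OF u(2) le int] by simp
  show ?thesis
    unfolding kH_def c by (simp add: algebra_simps)
qed

lemma aux_div: "(N::real) > 0 \<Longrightarrow> A = B / (1/N) \<Longrightarrow> B = (1/N) * A"
  by (simp add: field_simps)

lemma J2:
  fixes N H u :: real and n :: nat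
  assumes N: "N > 0" and u: "0 \<le> u" "u \<le> (real n - 1) / N" and n: "n \<ge> 1"
  shows "integral {(real n - 1)/N .. real n / N} (\<lambda>w. w powr (H-1/2) * (w-u) powr (H-3/2))
     = N powr (1 - 2*H) * integral {0..1} (\<lambda>v. (v + real n - 1) powr (H - 1/2) * (v + real n - 1 - N*u) powr (H - 3/2))"
proof -
  define f where "f = (\<lambda>w. w powr (H-1/2) * (w-u) powr (H-3/2))"
  have aff: "integral {0..1} (\<lambda>v. f ((1/N) * v + (real n - 1)/N)) = integral {(real n - 1)/N .. real n / N} f / (1/N)"
    using integral_affine_real[where c="1/N" and f=f and p="(real n - 1)/N" and q="real n / N" and d="(real n - 1)/N"] N
    by (simp add: field_simps)
  have pt: "f ((1/N) * v + (real n - 1)/N) = N powr (-(H-1/2) - (H - 3/2)) * ((v + real n - 1) powr (H - 1/2) * (v + real n - 1 - N*u) powr (H - 3/2))"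
    if v: "v \<in> {0..1}" for v
  proof -
    have e1: "(1/N) * v + (real n - 1)/N = (v + real n - 1) / N" using N by (simp add: field_simps)
    have e2: "(1/N) * v + (real n - 1)/N - u = (v + real n - 1 - N*u) / N" using N by (simp add: field_simps)
    have nn1: "0 \<le> v + real n - 1" using v n by auto
    have "N * u \<le> real n - 1" using u N by (simp add: field_simps)
    then have nn2: "0 \<le> v + real n - 1 - N*u" using v by auto
    have ex: "-(H-1/2) - (H-3/2) = -((H-1/2)+(H-3/2))" by simp
    have np: "N powr (-(H-1/2) - (H-3/2)) = inverse (N powr (H-1/2) * N powr (H-3/2))"
      unfolding ex by (simp only: powr_minus powr_add)
    show ?thesis unfolding f_def e1 e2 np
      using N nn1 nn2 by (simp add: powr_divide field_simps)
  qed
  have "integral {0..1} (\<lambda>v. f ((1/N) * v + (real n - 1)/N)) = integral {0..1} (\<lambda>v. N powr (-(H-1/2) - (H - 3/2)) * ((v + real n - 1) powr (H - 1/2) * (v + real n - 1 - N*u) powr (H - 3/2)))"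
    by (rule integral_cong) (use pt in auto)
  also have "\<dots> = N powr (-(H-1/2) - (H - 3/2)) * integral {0..1} (\<lambda>v. (v + real n - 1) powr (H - 1/2) * (v + real n - 1 - N*u) powr (H - 3/2))"
    by (rule integral_mult_right)
  finally have xx: "integral {(real n - 1)/N .. real n / N} f = (1/N) * (N powr (-(H-1/2) - (H - 3/2)) * integral {0..1} (\<lambda>v. (v + real n - 1) powr (H - 1/2) * (v + real n - 1 - N*u) powr (H - 3/2)))"
    using aux_div[OF N aff] by simp
  have yy: "(1/N) * N powr (-(H-1/2) - (H - 3/2)) = N powr (1 - 2*H)"
  proof -
    have "(1/N) * N powr (-(H-1/2) - (H - 3/2)) = N powr (-(H-1/2) - (H - 3/2) - 1)"
      using N by (simp add: powr_diff power2_eq_square)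
    then show ?thesis by (simp add: algebra_simps)
  qed
  show ?thesis using xx unfolding f_def mult.assoc[symmetric] yy .
qed

lemma expo1:
  fixes N H :: real assumes "N > 0"
  shows "N powr (-(1/2-H)) * N powr (1 - 2*H) = N powr (1/2-H)"
proof -
  have "N powr (-(1/2-H)) * N powr (1 - 2*H) = N powr (-(1/2-H) + (1 - 2*H))"
    by (simp only: powr_add)
  then show ?thesis by simp
qed

lemma expo2:
  fixes N H :: real assumes "N > 0"
  shows "N powr (-(1/2-H)) * N powr (-(H-1/2) - (H-3/2)) / N = N powr (1/2-H)"
proof -
  have "N powr (-(1/2-H)) * N powr (-(H-1/2) - (H-3/2)) * N powr (-1) = N powr (-(1/2-H) + (-(H-1/2) - (H-3/2)) + (-1))"
    by (simp only: powr_add)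
  moreover have "N powr (-1) = 1 / N" using assms by (simp add: powr_minus divide_inverse)
  ultimately show ?thesis by simp
qed

lemma upow:
  fixes N u p :: real assumes "N > 0" "u \<ge> 0"
  shows "u powr p = N powr (-p) * (N * u) powr p"
  using assms by (simp add: powr_mult powr_minus)

lemma Jpt:
  fixes N H u :: real and n :: nat
  assumes H: "1/2 < H" and N: "N > 0" and u: "0 \<le> u" "u \<le> (real n - 1) / N" and n: "n \<ge> 1"
  shows "kH H (real n / N) u - kH H ((real n - 1) / N) u = CH H * N powr (1/2-H) *
     ((N*u) powr (1/2-H) * integral {0..1} (\<lambda>v. (v + real n - 1) powr (H - 1/2) * (v + real n - 1 - N*u) powr (H - 3/2)))"
proof -
  have "kH H (real n / N) u - kH H ((real n - 1) / N) u = CH H * (N powr (-(1/2-H)) * (N*u) powr (1/2-H)) * (N powr (1 - 2*H) * integral {0..1} (\<lambda>v. (v + real n - 1) powr (H - 1/2) * (v + real n - 1 - N*u) powr (H - 3/2)))"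
    unfolding J1[OF H N u n] J2[OF N u n] upow[OF N u(1), of "1/2-H"] ..
  also have "\<dots> = CH H * (N powr (-(1/2-H)) * N powr (1 - 2*H)) *
     ((N*u) powr (1/2-H) * integral {0..1} (\<lambda>v. (v + real n - 1) powr (H - 1/2) * (v + real n - 1 - N*u) powr (H - 3/2)))"
    by (simp only: ac_simps)
  finally show ?thesis unfolding expo1[OF N] .
qed

lemma J_main:
  fixes H \<sigma> :: real and N n i :: nat
  assumes H: "1/2 < H" and N: "N \<ge> 1" and i: "1 \<le> i" "i < n"
  shows "JN N H \<sigma> n i = real N powr (-H) * jH H \<sigma> n i"
proof -
  define G where "G = (\<lambda>x. x powr (1/2-H) * integral {0..1} (\<lambda>v. (v + real n - 1) powr (H - 1/2) * (v + real n - 1 - x) powr (H - 3/2)))"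
  have Np: "real N > 0" using N by simp
  have pt: "kH H (real n / real N) u - kH H ((real n - 1) / real N) u = CH H * real N powr (1/2-H) * G (real N * u)"
    if u: "u \<in> {(real i - 1) / real N .. real i / real N}" for u
  proof -
    have "0 \<le> (real i - 1) / real N" using i by simp
    then have u0: "0 \<le> u" using u by auto
    have "real i \<le> real n - 1" using i by simp
    then have "real i / real N \<le> (real n - 1) / real N" using Np by (simp add: divide_right_mono)
    then have u1: "u \<le> (real n - 1) / real N" using u by auto
    show ?thesis unfolding G_def using Jpt[OF H Np u0 u1] i by simp
  qed
  have e1: "integral {(real i - 1) / real N .. real i / real N} (\<lambda>u. kH H (real n / real N) u - kH H ((real n - 1) / real N) u)
     = integral {(real i - 1) / real N .. real i / real N} (\<lambda>u. CH H * real N powr (1/2-H) * G (real N * u))"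
    by (rule integral_cong) (rule pt)
  have e2: "integral {(real i - 1) / real N .. real i / real N} (\<lambda>u. G (real N * u)) = integral {real i - 1 .. real i} G / real N"
    using integral_affine_real[OF Np, where f=G and p="real i - 1" and d=0 and q="real i"] by simp
  have "JN N H \<sigma> n i = \<sigma> * sqrt (real N) * (CH H * real N powr (1/2-H) * integral {(real i - 1) / real N .. real i / real N} (\<lambda>u. G (real N * u)))"
    unfolding JN_def e1 integral_mult_right ..
  also have "\<dots> = \<sigma> * sqrt (real N) * (CH H * real N powr (1/2-H) * (integral {real i - 1 .. real i} G / real N))"
    unfolding e2 ..
  also have "\<dots> = (sqrt (real N) * real N powr (1/2-H) / real N) * (\<sigma> * CH H * integral {real i - 1 .. real i} G)"
    by (simp add: field_simps)
  also have "\<dots> = real N powr (-H) * jH H \<sigma> n i"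
    unfolding powr_fact1[OF Np] jH_def G_def by (simp add: mult.assoc)
  finally show ?thesis .
qed

lemma g_inner:
  fixes N H u :: real and n :: nat
  assumes N: "N > 0" and u: "0 \<le> u" "u < real n / N"
  shows "integral {u .. real n / N} (\<lambda>w. w powr (H-1/2) * (w-u) powr (H-3/2)) =
     ((real n - N*u) / N) * (N powr (-(H-1/2) - (H-3/2)) * ((real n - N*u) powr (H-3/2) *
       integral {0..1} (\<lambda>y. (y * (real n - N*u) + N*u) powr (H - 1/2) * y powr (H - 3/2))))"
proof -
  define f where "f = (\<lambda>w. w powr (H-1/2) * (w-u) powr (H-3/2))"
  define c where "c = real n / N - u"
  have c: "c > 0" using u by (simp add: c_def)
  have cc: "c = (real n - N*u) / N" using N by (simp add: c_def field_simps)
  have aff: "integral {0..1} (\<lambda>y. f (c * y + u)) = integral {u .. real n / N} f / c"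
    using integral_affine_real[OF c, where f=f and p=u and d=u and q="real n / N"] c
    by (simp add: c_def)
  have nx: "0 \<le> real n - N*u" using u N by (simp add: field_simps)
  have pt: "f (c * y + u) = N powr (-(H-1/2) - (H-3/2)) * ((real n - N*u) powr (H-3/2) *
       ((y * (real n - N*u) + N*u) powr (H - 1/2) * y powr (H - 3/2)))"
    if y: "y \<in> {0..1}" for y
  proof -
    have e1: "c * y + u = (y * (real n - N*u) + N*u) / N" using N by (simp add: cc field_simps)
    have e2: "(y * (real n - N*u) + N*u) / N - u = (y * (real n - N*u)) / N" using N by (simp add: field_simps)
    have nn1: "0 \<le> y * (real n - N*u) + N*u" using y nx u N by auto
    have nn2: "0 \<le> y" using y by auto
    have ex: "-(H-1/2) - (H-3/2) = -((H-1/2)+(H-3/2))" by simp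
    have np: "N powr (-(H-1/2) - (H-3/2)) = inverse (N powr (H-1/2) * N powr (H-3/2))"
      unfolding ex by (simp only: powr_minus powr_add)
    have d1: "((y * (real n - N*u) + N*u) / N) powr (H-1/2) = (y * (real n - N*u) + N*u) powr (H-1/2) / N powr (H-1/2)"
      by (rule powr_divide)
    have d2: "((y * (real n - N*u)) / N) powr (H-3/2) = (y * (real n - N*u)) powr (H-3/2) / N powr (H-3/2)"
      by (rule powr_divide)
    have m: "(y * (real n - N*u)) powr (H-3/2) = y powr (H-3/2) * (real n - N*u) powr (H-3/2)"
      by (rule powr_mult)
    show ?thesis unfolding f_def e1 e2 np d1 d2 m
      using N by (simp add: field_simps)
  qed
  have "integral {0..1} (\<lambda>y. f (c * y + u)) = integral {0..1} (\<lambda>y. N powr (-(H-1/2) - (H-3/2)) * ((real n - N*u) powr (H-3/2) *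
       ((y * (real n - N*u) + N*u) powr (H - 1/2) * y powr (H - 3/2))))"
    by (rule integral_cong) (rule pt)
  also have "\<dots> = N powr (-(H-1/2) - (H-3/2)) * ((real n - N*u) powr (H-3/2) *
       integral {0..1} (\<lambda>y. (y * (real n - N*u) + N*u) powr (H - 1/2) * y powr (H - 3/2)))"
    by (simp only: integral_mult_right)
  finally have "integral {u .. real n / N} f = c * (N powr (-(H-1/2) - (H-3/2)) * ((real n - N*u) powr (H-3/2) *
       integral {0..1} (\<lambda>y. (y * (real n - N*u) + N*u) powr (H - 1/2) * y powr (H - 3/2))))"
    using aff c by (simp add: field_simps)
  then show ?thesis unfolding f_def cc .
qed

lemma gpt:
  fixes N H u :: real and n :: nat
  assumes N: "N > 0" and u: "0 \<le> u" "u \<le> real n / N"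
  shows "kH H (real n / N) u = CH H * N powr (1/2-H) *
     ((N*u) powr (1/2-H) * (real n - N*u) powr (H-1/2) * integral {0..1} (\<lambda>y. (y * (real n - N*u) + N*u) powr (H - 1/2) * y powr (H - 3/2)))"
proof (cases "u = real n / N")
  case True
  then have "real n - N*u = 0" using N by simp
  moreover have "kH H (real n / N) u = 0" unfolding kH_def True by simp
  ultimately show ?thesis by simp
next
  case False
  then have ul: "u < real n / N" using u by simp
  have pos: "0 < real n - N*u" using ul N by (simp add: field_simps)
  have pw: "(real n - N*u) * (real n - N*u) powr (H-3/2) = (real n - N*u) powr (H-1/2)"
  proof -
    have "(real n - N*u) powr (1 + (H-3/2)) = (real n - N*u) powr 1 * (real n - N*u) powr (H-3/2)"
      by (rule powr_add)
    then have "(real n - N*u) * (real n - N*u) powr (H-3/2) = (real n - N*u) powr (1 + (H-3/2))"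
      using pos by simp
    then show ?thesis by simp
  qed
  define L where "L = integral {0..1} (\<lambda>y. (y * (real n - N*u) + N*u) powr (H - 1/2) * y powr (H - 3/2))"
  have "kH H (real n / N) u = CH H * (N powr (-(1/2-H)) * (N*u) powr (1/2-H)) *
     (((real n - N*u) / N) * (N powr (-(H-1/2) - (H-3/2)) * ((real n - N*u) powr (H-3/2) * L)))"
    unfolding kH_def g_inner[OF N u(1) ul] upow[OF N u(1), of "1/2-H"] L_def ..
  also have "\<dots> = CH H * (N powr (-(1/2-H)) * N powr (-(H-1/2) - (H-3/2)) / N) *
     ((N*u) powr (1/2-H) * ((real n - N*u) * (real n - N*u) powr (H-3/2)) * L)"
    by (simp add: field_simps)
  finally show ?thesis unfolding expo2[OF N] pw L_def .
qed

lemma g_main: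
  fixes H \<sigma> :: real and N n :: nat
  assumes N: "N \<ge> 1" and n: "1 \<le> n"
  shows "gN N H \<sigma> n = real N powr (-H) * gH H \<sigma> n"
proof -
  define G where "G = (\<lambda>x. x powr (1/2-H) * (real n - x) powr (H-1/2) * integral {0..1} (\<lambda>y. (y * (real n - x) + x) powr (H - 1/2) * y powr (H - 3/2)))"
  have Np: "real N > 0" using N by simp
  have pt: "kH H (real n / real N) u = CH H * real N powr (1/2-H) * G (real N * u)"
    if u: "u \<in> {(real n - 1) / real N .. real n / real N}" for u
  proof -
    have "0 \<le> (real n - 1) / real N" using n by simp
    then have u0: "0 \<le> u" using u by auto
    show ?thesis unfolding G_def using gpt[OF Np u0] u by simp
  qed
  have e1: "integral {(real n - 1) / real N .. real n / real N} (\<lambda>u. kH H (real n / real N) u)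
     = integral {(real n - 1) / real N .. real n / real N} (\<lambda>u. CH H * real N powr (1/2-H) * G (real N * u))"
    by (rule integral_cong) (rule pt)
  have e2: "integral {(real n - 1) / real N .. real n / real N} (\<lambda>u. G (real N * u)) = integral {real n - 1 .. real n} G / real N"
    using integral_affine_real[OF Np, where f=G and p="real n - 1" and d=0 and q="real n"] by simp
  have "gN N H \<sigma> n = \<sigma> * sqrt (real N) * (CH H * real N powr (1/2-H) * integral {(real n - 1) / real N .. real n / real N} (\<lambda>u. G (real N * u)))"
    unfolding gN_def e1 integral_mult_right ..
  also have "\<dots> = \<sigma> * sqrt (real N) * (CH H * real N powr (1/2-H) * (integral {real n - 1 .. real n} G / real N))"
    unfolding e2 ..
  also have "\<dots> = (sqrt (real N) * real N powr (1/2-H) / real N) * (\<sigma> * CH H * integral {real n - 1 .. real n} G)"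
    by (simp add: field_simps)
  also have "\<dots> = real N powr (-H) * gH H \<sigma> n"
    unfolding powr_fact1[OF Np] gH_def G_def by (simp add: mult.assoc)
  finally show ?thesis .
qed

lemma powr_cancel: "(N::real) > 0 \<Longrightarrow> N powr H * (N powr (-H) * x) = x"
proof -
  assume N: "N > 0"
  have "N powr H * N powr (-H) = N powr (H + -H)" by (simp only: powr_add)
  then have "N powr H * N powr (-H) = 1" using N by simp
  then show ?thesis by (simp add: mult.assoc[symmetric])
qed

lemma X_scaled:
  fixes H \<sigma> :: real and N n :: nat and \<xi> :: "nat \<Rightarrow> real"
  assumes H: "1/2 < H" and N: "N \<ge> 1" and n: "1 \<le> n" "n \<le> N"
  shows "real N powr H * XN N H \<sigma> \<xi> n = (\<Sum>i=1..<n. jH H \<sigma> n i * \<xi> i) + gH H \<sigma> n * \<xi> n"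
proof -
  have Np: "real N > 0" using N by simp
  have "real N powr H * XN N H \<sigma> \<xi> n = (\<Sum>i=1..<n. real N powr H * JN N H \<sigma> n i * \<xi> i) + real N powr H * gN N H \<sigma> n * \<xi> n"
    unfolding XN_def by (simp add: distrib_left sum_distrib_left mult.assoc)
  also have "\<dots> = (\<Sum>i=1..<n. jH H \<sigma> n i * \<xi> i) + gH H \<sigma> n * \<xi> n"
  proof -
    have "(\<Sum>i=1..<n. real N powr H * JN N H \<sigma> n i * \<xi> i) = (\<Sum>i=1..<n. jH H \<sigma> n i * \<xi> i)"
    proof (rule sum.cong)
      fix i assume "i \<in> {1..<n}"
      then have "1 \<le> i" "i < n" by auto
      show "real N powr H * JN N H \<sigma> n i * \<xi> i = jH H \<sigma> n i * \<xi> i"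
        unfolding J_main[OF H N \<open>1 \<le> i\<close> \<open>i < n\<close>] powr_cancel[OF Np] by (rule refl)
    qed simp
    moreover have "real N powr H * gN N H \<sigma> n = gH H \<sigma> n"
      unfolding g_main[OF N n(1)] powr_cancel[OF Np] ..
    ultimately show ?thesis by simp
  qed
  finally show ?thesis .
qed

theorem proposition4p1:
  fixes H \<sigma> :: real and N :: nat
  assumes "1/2 < H" "H < 1" "\<sigma> > 0" "N > 1"
  shows "(\<forall>i n. 1 \<le> i \<and> i < n \<and> n \<le> N \<longrightarrow> JN N H \<sigma> n i = real N powr (-H) * jH H \<sigma> n i)
       \<and> (\<forall>n. 1 \<le> n \<and> n \<le> N \<longrightarrow> gN N H \<sigma> n = real N powr (-H) * gH H \<sigma> n)
       \<and> (\<forall>\<xi> :: nat \<Rightarrow> real. (\<forall>i. \<xi> i = 1 \<or> \<xi> i = -1) \<longrightarrow>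
            (\<forall>n. 1 \<le> n \<and> n \<le> N \<longrightarrow>
               real N powr H * XN N H \<sigma> \<xi> n = real n powr H * XN n H \<sigma> \<xi> n))"
proof -
  have N: "N \<ge> 1" using assms(4) by simp
  show ?thesis
  proof (intro conjI allI impI)
    fix i n assume "1 \<le> i \<and> i < n \<and> n \<le> N"
    then show "JN N H \<sigma> n i = real N powr (-H) * jH H \<sigma> n i"
      using J_main[OF assms(1) N] by blast
  next
    fix n assume "1 \<le> n \<and> n \<le> N"
    then show "gN N H \<sigma> n = real N powr (-H) * gH H \<sigma> n"
      using g_main[OF N] by blast
  next
    fix \<xi> :: "nat \<Rightarrow> real" and n assume "1 \<le> n \<and> n \<le> N"
    then have n: "1 \<le> n" "n \<le> N" by auto
    show "real N powr H * XN N H \<sigma> \<xi> n = real n powr H * XN n H \<sigma> \<xi> n"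
      unfolding X_scaled[OF assms(1) N n] X_scaled[OF assms(1) n(1) n(1) order_refl] ..
  qed
qed

end
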